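(* Let $q$ be a prime power, $e\ge 2$, $r$ a positive integer, $a\in\mathbb{F}_{q^e}$ with $a\neq 0$, $f(x)=x^r(x^{q-1}+a)$, and $\ell=q^{e-1}+\cdots+q+1$. Suppose $(-a)^{\ell}\neq 1$ and $\gcd(r,q-1)=1$. (i) If $r\bmod\ell\in\{1,\ell-q\}$, then $f(x)$ permutes $\mathbb{F}_{q^e}$. (ii) If $e$ is odd and $r\bmod \ell\in\{q^{(e+1)/2}+1,\ \ell-q^{(e+1)/2}-q\}$, then $f(x)$ permutes $\mathbb{F}_{q^e}$.
   Context: $r\bmod\ell$ denotes the least nonnegative residue of $r$ modulo $\ell$. *)

theory Defs
  imports "HOL-Computational_Algebra.Primes"
begin

end

theory Submission
  imports Defs "HOL-Number_Theory.Residues"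
begin

lemma pow_card_minus1:
  fixes x :: "'a::{field,finite}"
  assumes "x \<noteq> 0"
  shows "x ^ (card (UNIV::'a set) - 1) = 1"
proof -
  let ?S = "UNIV - {0::'a}"
  have "(\<Prod>y\<in>?S. x * y) = (\<Prod>y\<in>?S. y)"
    by (rule prod.reindex_bij_witness[of _ "\<lambda>y. y / x" "\<lambda>y. x * y"]) (use assms in auto)
  moreover have "(\<Prod>y\<in>?S. x * y) = x ^ card ?S * (\<Prod>y\<in>?S. y)" by (simp add: prod.distrib)
  moreover have "(\<Prod>y\<in>?S. y) \<noteq> 0" by simp
  moreover have "card ?S = card (UNIV::'a set) - 1" by (simp add: card_Diff_singleton)
  ultimately show ?thesis by (metis mult_cancel_right1)
qed

lemma frob:
  fixes q :: nat
  assumes q_pp: "\<exists>p k. prime p \<and> k \<ge> 1 \<and> q = p ^ k" and card: "card (UNIV :: 'a::{field,finite} set) = q ^ e"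
  shows "((x::'a) + y)^q = x^q + y^q"
proof -
  obtain p k where pk: "prime p" "k \<ge> 1" "q = p^k" using q_pp by blast
  have fin: "finite (UNIV::'a set)" by simp
  have cpos: "CHAR('a) > 0" using finite_imp_CHAR_pos[OF fin] .
  have cp: "prime CHAR('a)" using prime_CHAR_semidom cpos by blast
  have "CHAR('a) dvd p ^ (k*e)" using CHAR_dvd_CARD[where 'a='a] card pk by (simp add: power_mult)
  hence "CHAR('a) dvd p" using cp prime_dvd_power by blast
  hence "CHAR('a) = p" using pk(1) cp by (simp add: primes_dvd_imp_eq)
  then show ?thesis using freshmans_dream'[OF cp, of q k] pk by simp
qed

lemma frob_pow:
  assumes "\<And>x y::'a::comm_ring_1. (x + y)^q = x^q + y^q"
  shows "((x::'a) + y)^(q^j) = x^(q^j) + y^(q^j)"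
proof (induction j arbitrary: x y)
  case (Suc j)
  have "(x + y)^(q^Suc j) = ((x+y)^q)^(q^j)" by (simp add: power_mult mult.commute)
  also have "\<dots> = x^(q^Suc j) + y^(q^Suc j)" using Suc assms by (simp add: power_mult mult.commute)
  finally show ?case .
qed simp

lemma fix_pow:
  assumes "(z::'a::comm_ring_1)^q = z"
  shows "z^(q^j) = z"
proof (induction j)
  case (Suc j)
  have "z^(q^Suc j) = (z^q)^(q^j)" by (simp add: power_mult mult.commute)
  then show ?case using Suc assms by simp
qed simp

lemma mainP:
  fixes x y b :: "'a::field"
  assumes frob: "\<And>x y::'a. (x + y)^q = x^q + y^q"
    and q1: "q \<ge> 1"
    and Nfix: "\<And>z::'a. (z^l)^q = z^l"
    and unit: "\<And>z::'a. z \<noteq> 0 \<Longrightarrow> (z^(q-1))^l = 1"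
    and hb: "(-b)^l \<noteq> 1"
    and hK: "\<And>t::'a. t^(K+q) = (t^(K+1))^(q^j)"
    and x0: "x \<noteq> 0" and y0: "y \<noteq> 0"
    and eq: "(y^K*(y^q+b*y))^(q-1) = (x^K*(x^q+b*x))^(q-1)"
  shows "(y/x)^(q-1) = 1"
proof -
  have nz: "z^K*(z^q+b*z) \<noteq> 0" if "z \<noteq> 0" for z
  proof
    assume "z^K*(z^q+b*z) = 0"
    moreover have "z^K*(z^q+b*z) = z^K*z*(z^(q-1)+b)" using q1 by (cases q) (auto simp: algebra_simps)
    ultimately have "z^(q-1) + b = 0" using that by simp
    hence "z^(q-1) = -b" by (simp add: eq_neg_iff_add_eq_0)
    then show False using unit[OF that] hb by simp
  qed
  define c where "c = (y^K*(y^q+b*y)) / (x^K*(x^q+b*x))"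
  have c0: "c \<noteq> 0" using nz x0 y0 by (simp add: c_def)
  have cq1: "c^(q-1) = 1" using eq nz[OF x0] by (simp add: c_def power_divide)
  have cq: "c^q = c" using cq1 q1 by (cases q) auto
  have cqj: "c^(q^j) = c" using fix_pow[OF cq] .
  define t where "t = y / x"
  have yt: "y = t * x" using x0 by (simp add: t_def)
  have t0: "t \<noteq> 0" using x0 y0 by (simp add: t_def)
  define A where "A = t^(K+1)"
  have A': "t^(K+q) = A^(q^j)" using hK by (simp add: A_def)
  have e1: "y^K*(y^q+b*y) = c*(x^K*(x^q+b*x))" using nz[OF x0] by (simp add: c_def)
  have xq: "x^q = x^(q-1) * x" using q1 by (cases q) auto
  have tq: "t^q = t^(q-1) * t" using q1 by (cases q) auto
  have "y^K*(y^q+b*y) - c*(x^K*(x^q+b*x)) = x^K * x * (x^(q-1) * (t^(K+q) - c) + b*(A - c))"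
    unfolding yt A_def by (simp add: power_mult_distrib power_add xq algebra_simps)
  hence "x^K * x * (x^(q-1) * (t^(K+q) - c) + b*(A - c)) = 0" using e1 by simp
  hence "x^(q-1) * (t^(K+q) - c) + b*(A - c) = 0" using x0 by simp
  hence e2: "x^(q-1) * (t^(K+q) - c) = -b*(A - c)" by (simp add: eq_neg_iff_add_eq_0)
  show ?thesis
  proof (cases "A = c")
    case True
    with e2 x0 have "t^(K+q) = t^(K+1)" by (simp add: A_def)
    hence "t^K * t * (t^(q-1) - 1) = 0" by (simp add: power_add tq algebra_simps)
    hence "t^(q-1) = 1" using t0 by simp
    then show ?thesis by (simp add: t_def)
  next
    case False
    have fr: "(A - c)^(q^j) = A^(q^j) - c"
    proof -
      have "((A - c) + c)^(q^j) = (A-c)^(q^j) + c^(q^j)" by (rule frob_pow[OF frob])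
      then show ?thesis using cqj by simp
    qed
    have Nj: "(z^l)^(q^j) = z^l" for z :: 'a using fix_pow[OF Nfix] .
    have "(x^(q-1))^l * ((A - c)^(q^j))^l = (-b)^l * (A - c)^l"
      using e2 fr A' by (metis power_mult_distrib)
    hence "(A - c)^l = (-b)^l * (A - c)^l"
      using unit[OF x0] Nj[of "A - c"] by (simp add: power_mult[symmetric] mult.commute)
    moreover have "(A - c)^l \<noteq> 0" using False by simp
    ultimately have "(-b)^l = 1" by (metis mult_cancel_right1)
    with hb show ?thesis by simp
  qed
qed

lemma injB:
  fixes f :: "'a::{field,finite} \<Rightarrow> 'a" and q r :: nat
  assumes f0: "f 0 = 0" and fnz: "\<And>x. x \<noteq> 0 \<Longrightarrow> f x \<noteq> 0"
    and hom: "\<And>x c. c^(q-1) = 1 \<Longrightarrow> f (c*x) = c^r * f x"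
    and hg: "gcd r (q-1) = 1" and rpos: "r > 0"
    and cls: "\<And>x y. x \<noteq> 0 \<Longrightarrow> y \<noteq> 0 \<Longrightarrow> f y ^ (q-1) = f x ^ (q-1) \<Longrightarrow> (y/x)^(q-1) = 1"
  shows "bij f"
proof -
  have root: "c = 1" if "c^r = 1" "c^(q-1) = 1" for c :: 'a
  proof -
    obtain u v where uv: "r * u = (q-1) * v + gcd r (q-1)" using bezout_nat[of r "q-1"] rpos by auto
    have A: "c^((q-1)*v) = 1" using that(2) by (simp add: power_mult)
    have "c^(r*u) = 1" using that(1) by (simp add: power_mult)
    hence "c^((q-1)*v + 1) = 1" using uv hg by simp
    thus "c = 1" using A by (simp add: power_add)
  qed
  have "inj f"
  proof (rule injI)
    fix x y assume eq: "f x = f y"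
    show "x = y"
    proof (cases "x = 0 \<or> y = 0")
      case True thus ?thesis using eq f0 fnz by metis
    next
      case False
      hence x0: "x\<noteq>0" and y0: "y\<noteq>0" by auto
      define c where "c = y/x"
      have c1: "c^(q-1) = 1" using cls[OF x0 y0] eq by (simp add: c_def)
      have yc: "y = c*x" using x0 by (simp add: c_def)
      have "f x = c^r * f x" using hom[OF c1, of x] yc eq by simp
      hence "c^r = 1" using fnz[OF x0] by (metis mult_cancel_right1)
      hence "c = 1" using root c1 by blast
      thus ?thesis using yc by simp
    qed
  qed
  thus ?thesis using finite_UNIV_inj_surj[of f] by (simp add: bij_def)
qed

lemma common_f:
  fixes a :: "'a::{field,finite}"
  assumes unit: "\<And>z::'a. z \<noteq> 0 \<Longrightarrow> (z^(q-1))^l = 1"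
    and hl: "(-a)^l \<noteq> 1" and rpos: "r > 0"
  shows "(\<lambda>x::'a. x ^ r * (x ^ (q - 1) + a)) 0 = 0"
    and "\<And>x. x \<noteq> 0 \<Longrightarrow> (\<lambda>x::'a. x ^ r * (x ^ (q - 1) + a)) x \<noteq> 0"
    and "\<And>x c. c^(q-1) = 1 \<Longrightarrow> (\<lambda>x::'a. x ^ r * (x ^ (q - 1) + a)) (c*x) = c^r * (\<lambda>x::'a. x ^ r * (x ^ (q - 1) + a)) x"
proof -
  show "(\<lambda>x::'a. x ^ r * (x ^ (q - 1) + a)) 0 = 0" using rpos by simp
next
  fix x :: 'a assume x0: "x \<noteq> 0"
  have "x^(q-1) + a \<noteq> 0"
  proof
    assume "x^(q-1) + a = 0"
    hence "x^(q-1) = -a" by (simp add: eq_neg_iff_add_eq_0)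
    thus False using unit[OF x0] hl by simp
  qed
  thus "(\<lambda>x::'a. x ^ r * (x ^ (q - 1) + a)) x \<noteq> 0" using x0 by simp
next
  fix x c :: 'a assume "c^(q-1) = 1"
  thus "(\<lambda>x::'a. x ^ r * (x ^ (q - 1) + a)) (c*x) = c^r * (\<lambda>x::'a. x ^ r * (x ^ (q - 1) + a)) x"
    by (simp add: power_mult_distrib)
qed

lemma caseA:
  fixes a :: "'a::{field,finite}"
  assumes frob: "\<And>x y::'a. (x + y)^q = x^q + y^q"
    and q1: "q \<ge> 1"
    and Nfix: "\<And>z::'a. (z^l)^q = z^l"
    and unit: "\<And>z::'a. z \<noteq> 0 \<Longrightarrow> (z^(q-1))^l = 1"
    and hl: "(-a)^l \<noteq> 1" and rpos: "r > 0" and hg: "gcd r (q-1) = 1"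
    and hK: "\<And>t::'a. t^(K+q) = (t^(K+1))^(q^j)"
    and hr: "r mod l = K + 1"
  shows "bij (\<lambda>x::'a. x ^ r * (x ^ (q - 1) + a))"
proof (rule injB[OF common_f[OF unit hl rpos] hg rpos])
  fix x y :: 'a
  assume x0: "x \<noteq> 0" and y0: "y \<noteq> 0"
    and eq: "(y ^ r * (y ^ (q - 1) + a)) ^ (q - 1) = (x ^ r * (x ^ (q - 1) + a)) ^ (q - 1)"
  define n where "n = r div l"
  have rr0: "r = n * l + (K + 1)" using div_mult_mod_eq[of r l] hr unfolding n_def by simp
  hence rr: "r = l * n + K + 1" by (simp add: mult.commute)
  have key: "(z ^ r * (z ^ (q - 1) + a)) ^ (q - 1) = (z^K*(z^q+a*z))^(q-1)" if z0: "z \<noteq> 0" for z :: 'a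
  proof -
    have zq: "z^q = z^(q-1) * z" using q1 by (cases q) auto
    have "z ^ r * (z ^ (q - 1) + a) = z^(l*n) * (z^K*(z^q+a*z))"
      unfolding rr zq by (simp add: power_add algebra_simps)
    moreover have "(z^(l*n))^(q-1) = 1"
    proof -
      have "(z^(l*n))^(q-1) = ((z^(q-1))^l)^n" by (simp add: power_mult[symmetric] mult_ac)
      thus ?thesis using unit[OF z0] by simp
    qed
    ultimately show ?thesis by (simp add: power_mult_distrib)
  qed
  have "(y^K*(y^q+a*y))^(q-1) = (x^K*(x^q+a*x))^(q-1)"
    using eq key[OF x0] key[OF y0] by argo
  then show "(y/x)^(q-1) = 1" using mainP[OF frob q1 Nfix unit hl hK x0 y0] by blast
qed

lemma caseB:
  fixes a :: "'a::{field,finite}"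
  assumes frob: "\<And>x y::'a. (x + y)^q = x^q + y^q"
    and q1: "q \<ge> 1"
    and Nfix: "\<And>z::'a. (z^l)^q = z^l"
    and unit: "\<And>z::'a. z \<noteq> 0 \<Longrightarrow> (z^(q-1))^l = 1"
    and hl: "(-a)^l \<noteq> 1" and rpos: "r > 0" and hg: "gcd r (q-1) = 1" and a0: "a \<noteq> 0"
    and hK: "\<And>t::'a. t^(K+q) = (t^(K+1))^(q^j)"
    and hr: "r mod l + K + q = l"
  shows "bij (\<lambda>x::'a. x ^ r * (x ^ (q - 1) + a))"
proof (rule injB[OF common_f[OF unit hl rpos] hg rpos])
  fix x y :: 'a
  assume x0: "x \<noteq> 0" and y0: "y \<noteq> 0"
    and eq: "(y ^ r * (y ^ (q - 1) + a)) ^ (q - 1) = (x ^ r * (x ^ (q - 1) + a)) ^ (q - 1)"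
  define n where "n = r div l"
  have rr0: "r = n * l + r mod l" using div_mult_mod_eq[of r l] unfolding n_def by simp
  hence rr: "r + K + q = l * (n + 1)" using hr by (simp add: algebra_simps)
  define b where "b = inverse a"
  have hb: "(-b)^l \<noteq> 1"
  proof
    assume "(-b)^l = 1"
    moreover have "(-b)^l = (inverse (-a))^l" by (simp add: b_def)
    moreover have "(inverse (-a))^l = inverse ((-a)^l)" by (rule power_inverse)
    ultimately have "inverse ((-a)^l) = 1" by simp
    thus False using hl by simp
  qed
  have key: "(z ^ r * (z ^ (q - 1) + a)) ^ (q - 1) = a^(q-1) * ((inverse z)^K*((inverse z)^q+b*(inverse z)))^(q-1)"
    if z0: "z \<noteq> 0" for z :: 'a
  proof -
    define w where "w = inverse z"
    have zq: "z^q = z^(q-1) * z" using q1 by (cases q) auto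
    have id: "a * z^(K+q) * (w^K*(w^q+b*w)) = z^(q-1) + a"
    proof -
      have zw: "z * w = 1" using z0 by (simp add: w_def)
      have "a * z^(K+q) * (w^K*(w^q+b*w)) = a * (z*w)^K * (z*w)^q + (a*b) * (z*w)^K * z^(q-1) * (z * w)"
        by (simp add: power_add power_mult_distrib zq algebra_simps)
      also have "\<dots> = a + z^(q-1)" using zw a0 by (simp add: b_def)
      finally show ?thesis by simp
    qed
    have "z^(K+q) * (z ^ r * (z ^ (q - 1) + a)) = z^(r+K+q) * (z ^ (q - 1) + a)"
      by (simp add: power_add mult_ac)
    also have "\<dots> = z^(l*(n+1)) * (z ^ (q - 1) + a)" by (simp only: rr)
    also have "\<dots> = z^(l*(n+1)) * (a * z^(K+q) * (w^K*(w^q+b*w)))" by (simp only: id)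
    also have "\<dots> = z^(K+q) * (z^(l*(n+1)) * (a * (w^K*(w^q+b*w))))" by (simp only: mult_ac)
    finally have "z ^ r * (z ^ (q - 1) + a) = z^(l*(n+1)) * (a * (w^K*(w^q+b*w)))"
      using z0 by simp
    moreover have "(z^(l*(n+1)))^(q-1) = 1"
    proof -
      have ex: "l*(n+1)*(q-1) = (q-1)*l*(n+1)" by (simp only: mult_ac)
      have "(z^(l*(n+1)))^(q-1) = z^(l*(n+1)*(q-1))" by (rule power_mult[symmetric])
      also have "\<dots> = ((z^(q-1))^l)^(n+1)" by (simp only: ex power_mult)
      finally have "(z^(l*(n+1)))^(q-1) = ((z^(q-1))^l)^(n+1)" .
      thus ?thesis using unit[OF z0] by simp
    qed
    ultimately show ?thesis by (simp add: power_mult_distrib w_def)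
  qed
  have "a^(q-1) * ((inverse y)^K*((inverse y)^q+b*(inverse y)))^(q-1) = a^(q-1) * ((inverse x)^K*((inverse x)^q+b*(inverse x)))^(q-1)"
    using eq key[OF x0] key[OF y0] by argo
  hence "((inverse y)^K*((inverse y)^q+b*(inverse y)))^(q-1) = ((inverse x)^K*((inverse x)^q+b*(inverse x)))^(q-1)"
    using a0 by simp
  hence "(inverse y / inverse x)^(q-1) = 1"
    using mainP[OF frob q1 Nfix unit hb hK, of "inverse x" "inverse y"] x0 y0 by simp
  moreover have "inverse y / inverse x = x / y" using x0 y0 by (simp add: field_simps)
  ultimately have h: "(x/y)^(q-1) = 1" by simp
  have "(y/x)^(q-1) = (inverse (x/y))^(q-1)" by simp
  also have "\<dots> = inverse ((x/y)^(q-1))" by (rule power_inverse)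
  finally show "(y/x)^(q-1) = 1" using h by simp
qed

lemma geo:
  fixes q :: nat
  assumes q1: "q \<ge> 1"
  shows "(q-1) * (\<Sum>i<n. q^i) = q^n - 1"
proof (induction n)
  case (Suc n)
  have a: "1 \<le> q^n" using q1 by simp
  have b: "q^n \<le> q*q^n" using q1 by simp
  have "(q-1)*(\<Sum>i<Suc n. q^i) = (q-1)*(\<Sum>i<n. q^i) + (q-1)*q^n" by (simp add: distrib_left)
  also have "\<dots> = (q^n - 1) + (q*q^n - q^n)" using Suc.IH by (simp add: diff_mult_distrib)
  also have "\<dots> = q^Suc n - 1" using a b by simp
  finally show ?case .
qed simp

theorem corollary3p5:
  fixes q e r :: nat and a :: "'a :: {field, finite}"
  assumes q_pp: "\<exists>p k. prime p \<and> k \<ge> 1 \<and> q = p ^ k"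
    and card: "card (UNIV :: 'a set) = q ^ e"
    and e2: "e \<ge> 2"
    and rpos: "r > 0"
    and a0: "a \<noteq> 0"
    and hl: "(- a) ^ (\<Sum>i<e. q ^ i) \<noteq> 1"
    and hg: "gcd r (q - 1) = 1"
  shows "(r mod (\<Sum>i<e. q ^ i) \<in> {1, (\<Sum>i<e. q ^ i) - q}
            \<longrightarrow> bij (\<lambda>x::'a. x ^ r * (x ^ (q - 1) + a)))
       \<and> (odd e \<and> r mod (\<Sum>i<e. q ^ i) \<in>
              {q ^ ((e + 1) div 2) + 1, (\<Sum>i<e. q ^ i) - q ^ ((e + 1) div 2) - q}
            \<longrightarrow> bij (\<lambda>x::'a. x ^ r * (x ^ (q - 1) + a)))"
proof -
  define l where "l = (\<Sum>i<e. q ^ i)"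
  obtain p k where pk: "prime p" "k \<ge> 1" "q = p^k" using q_pp by blast
  have "p \<ge> 2" using pk(1) prime_ge_2_nat by blast
  moreover have "p \<le> p^k" using pk(2) \<open>p \<ge> 2\<close> by (simp add: self_le_power)
  ultimately have q2: "q \<ge> 2" using pk(3) by simp
  hence q1: "q \<ge> 1" by simp
  have geo': "(q-1) * l = q^e - 1" unfolding l_def using geo[OF q1] .
  have qe1: "q^e \<ge> 1" using q1 by simp
  have pw: "x^((q-1)*l) = 1" if "x \<noteq> 0" for x :: 'a
    using pow_card_minus1[OF that] card geo' by simp
  have unit: "(z^(q-1))^l = 1" if "z \<noteq> 0" for z :: 'a
    using pw[OF that] by (simp add: power_mult)
  have lpos: "l \<ge> 1"
  proof -
    have "q^0 \<le> l" unfolding l_def using e2 by (intro member_le_sum) auto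
    thus ?thesis by simp
  qed
  have Nfix: "(z^l)^q = z^l" for z :: 'a
  proof (cases "z = 0")
    case True thus ?thesis using lpos q1 by (simp add: power_0_left)
  next
    case False
    have ex: "l*q = (q-1)*l + l" using q1 by (cases q) (auto simp: algebra_simps)
    have "(z^l)^q = z^((q-1)*l) * z^l" by (simp only: power_mult[symmetric] ex power_add)
    thus ?thesis using pw[OF False] by simp
  qed
  have frobq: "(x + y)^q = x^q + y^q" for x y :: 'a using frob[OF q_pp card] .
  have powQ: "t^(q^e) = t" for t :: 'a
  proof (cases "t = 0")
    case True thus ?thesis using q1 by simp
  next
    case False
    have "q^e = (q-1)*l + 1" using geo' qe1 by simp
    thus ?thesis using pw[OF False] by (simp add: power_add)
  qed
  have hK0: "t^(0+q) = (t^(0+1))^(q^1)" for t :: 'a by simp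
  have lq: "1 + q \<le> l"
  proof -
    have "sum (\<lambda>i. q^i) {0,1} \<le> l" unfolding l_def
      by (rule sum_mono2) (use e2 in auto)
    thus ?thesis by simp
  qed
  have hl': "(-a)^l \<noteq> 1" using hl by (simp add: l_def)
  have part1: "bij (\<lambda>x::'a. x ^ r * (x ^ (q - 1) + a))" if "r mod l \<in> {1, l - q}"
  proof -
    from that consider "r mod l = 0 + 1" | "r mod l + 0 + q = l" using lq by force
    then show ?thesis
    proof cases
      case 1 show ?thesis by (rule caseA[OF frobq q1 Nfix unit hl' rpos hg hK0 1])
    next
      case 2 show ?thesis by (rule caseB[OF frobq q1 Nfix unit hl' rpos hg a0 hK0 2])
    qed
  qed
  have part2: "bij (\<lambda>x::'a. x ^ r * (x ^ (q - 1) + a))"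
    if oe: "odd e" and hs: "r mod l \<in> {q ^ ((e + 1) div 2) + 1, l - q ^ ((e + 1) div 2) - q}"
  proof -
    define m where "m = (e + 1) div 2"
    have em: "2*m = e+1" using oe by (simp add: m_def)
    have m2: "m \<ge> 2" "m < e" using em e2 oe by presburger+
    have hKm: "t^(q^m+q) = (t^(q^m+1))^(q^m)" for t :: 'a
    proof -
      have "q^m*q^m = q^e*q" using em by (simp flip: power_add power_Suc2 add: mult_2)
      hence "(t^(q^m+1))^(q^m) = (t^(q^e))^q * t^(q^m)" by (simp add: power_mult[symmetric] algebra_simps power_add)
      thus ?thesis using powQ by (simp add: power_add mult.commute)
    qed
    have lqm: "1 + q + q^m \<le> l"
    proof -
      have "sum (\<lambda>i. q^i) {0,1,m} \<le> l" unfolding l_def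
        by (rule sum_mono2) (use m2 in auto)
      thus ?thesis using m2 by simp
    qed
    from hs consider "r mod l = q^m + 1" | "r mod l + q^m + q = l" using lqm unfolding m_def by force
    then show ?thesis
    proof cases
      case 1 show ?thesis by (rule caseA[OF frobq q1 Nfix unit hl' rpos hg hKm 1])
    next
      case 2 show ?thesis by (rule caseB[OF frobq q1 Nfix unit hl' rpos hg a0 hKm 2])
    qed
  qed
  show ?thesis using part1 part2 unfolding l_def by blast
qed

end
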